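(* Let $q=2^m$, let $k\in\mathbb{F}_q$ with $Tr(k)=1$, let $i\in\mathbb{F}_{q^2}\setminus\mathbb{F}_q$ with $i^2=i+k$, and let $\alpha=A+iB$, $\beta=C+iD$ with $A,B,C,D\in\mathbb{F}_q$ and $\alpha\beta\neq 0$. Then the following are equivalent: (i) $A=\xi^2+\xi$, $B=D=0$, $C=\xi^2$ for some $\xi\in\mathbb{F}_q\setminus\{0,1\}$ with $Tr(\xi/(\xi+1))=0$; (ii) $\beta(1+\alpha^{q+1}+\beta^{q+1})+\alpha^{2q}=0$, $\beta^{q+1}\neq 1$, $Tr\left(\frac{\beta^{q+1}}{\alpha^{q+1}}\right)=0$, and $\beta\in\mathbb{F}_q$.
   Context: $Tr:\mathbb{F}_q\to\mathbb{F}_2$ is the absolute trace $Tr(z)=z+z^2+\cdots+z^{2^{m-1}}$. *)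

theory Defs
  imports Main
begin

text \<open>We work inside a finite field of type 'a with CARD('a) = q^2, q = 2^m,
 playing the role of F_{q^2}. The subfield F_q is the set of fixed points of
 the Frobenius x \<mapsto> x^q.\<close>

definition subfield_q :: "nat \<Rightarrow> 'a::field set" where
  "subfield_q m = {x. x ^ (2 ^ m) = x}"

definition abs_trace :: "nat \<Rightarrow> 'a::field \<Rightarrow> 'a" where
  "abs_trace m z = (\<Sum>j<m. z ^ (2 ^ j))"

end

theory Submission
  imports Defs
begin


lemma fermat:
  fixes x :: "'a::{field,finite}" assumes "x \<noteq> 0"
  shows "x ^ (card (UNIV::'a set) - 1) = 1"
proof -
  let ?S = "UNIV - {0::'a}"
  have bij: "bij_betw ((*) x) ?S ?S"
    unfolding bij_betw_def inj_on_def using assms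
    by (auto intro!: image_eqI[where x="_ / x"] simp: field_simps)
  have "(\<Prod>y\<in>?S. x*y) = (\<Prod>y\<in>?S. y)"
    using prod.reindex_bij_betw[OF bij, of "\<lambda>y. y"] by simp
  moreover have "(\<Prod>y\<in>?S. x*y) = x ^ card ?S * (\<Prod>y\<in>?S. y)"
    by (simp add: prod.distrib)
  moreover have "(\<Prod>y\<in>?S. y) \<noteq> 0" by simp
  moreover have "card ?S = card (UNIV::'a set) - 1"
    by (simp add: card_Diff_singleton)
  ultimately show ?thesis by simp
qed

lemma char2_add_self: assumes "(1::'a::field)+1=0" shows "x + x = (0::'a)"
proof -
  have "x+x = (1+1)*x" by (simp add: algebra_simps)
  thus ?thesis using assms by simp
qed

lemma char2_minus: assumes "(1::'a::field)+1=0" shows "- x = (x::'a)"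
  using char2_add_self[OF assms, of x] by (metis eq_neg_iff_add_eq_0)

lemma char2_sq: assumes "(1::'a::field)+1=0" shows "(x+y)^2 = x^2 + (y::'a)^2"
proof -
  have "(x+y)^2 = x^2+y^2+(x*y+x*y)" by (simp add: power2_eq_square algebra_simps)
  thus ?thesis using char2_add_self[OF assms] by simp
qed

lemma frob: assumes "(1::'a::field)+1=0" shows "(x+y)^(2^n) = x^(2^n) + (y::'a)^(2^n)"
proof (induction n)
  case 0 then show ?case by simp
next
  case (Suc n)
  have "(x+y)^(2^Suc n) = ((x+y)^(2^n))^2" by (simp add: power_mult[symmetric] mult.commute)
  also have "\<dots> = (x^(2^n))^2 + (y^(2^n))^2" using Suc char2_sq[OF assms] by simp
  also have "\<dots> = x^(2^Suc n) + y^(2^Suc n)" by (simp add: power_mult[symmetric] mult.commute)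
  finally show ?case .
qed

lemma sq_inj: assumes "(1::'a::field)+1=0" and "x^2 = (y::'a)^2" shows "x = y"
proof -
  have "(x+y)^2 = 0" using char2_sq[OF assms(1)] assms(2) char2_add_self[OF assms(1)] by simp
  hence "x + y = 0" by simp
  thus ?thesis using char2_minus[OF assms(1)] by (metis eq_neg_iff_add_eq_0)
qed

lemma trace_sq: assumes "z^(2^m) = (z::'a::field)" shows "abs_trace m (z^2) = abs_trace m z"
proof -
  let ?f = "\<lambda>j. z^(2^j)"
  have 1: "abs_trace m (z^2) = (\<Sum>j<m. ?f (Suc j))"
    unfolding abs_trace_def by (simp add: power_mult[symmetric])
  have "(\<Sum>j<Suc m. ?f j) = ?f 0 + (\<Sum>j<m. ?f (Suc j))" by (rule sum.lessThan_Suc_shift)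
  moreover have "(\<Sum>j<Suc m. ?f j) = (\<Sum>j<m. ?f j) + ?f m" by simp
  ultimately have "(\<Sum>j<m. ?f (Suc j)) = (\<Sum>j<m. ?f j)" using assms by simp
  thus ?thesis using 1 unfolding abs_trace_def by simp
qed



lemma pcomm: "((x::'a::monoid_mult)^a)^b = (x^b)^a"
  by (metis power_mult mult.commute)

theorem proposition2:
  fixes m :: nat and k i A B C D :: "'a::{field,finite}"
  assumes card: "card (UNIV :: 'a set) = (2 ^ m) ^ 2"
    and k: "k \<in> subfield_q m" and trk: "abs_trace m k = 1"
    and i: "i \<notin> subfield_q m" and i2: "i ^ 2 = i + k"
    and ABCD: "A \<in> subfield_q m" "B \<in> subfield_q m" "C \<in> subfield_q m" "D \<in> subfield_q m"
    and nz: "(A + i * B) * (C + i * D) \<noteq> 0"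
  shows "(\<exists>\<xi>\<in>subfield_q m. \<xi> \<noteq> 0 \<and> \<xi> \<noteq> 1 \<and> abs_trace m (\<xi> / (\<xi> + 1)) = 0 \<and>
            A = \<xi>^2 + \<xi> \<and> B = 0 \<and> D = 0 \<and> C = \<xi>^2)
     \<longleftrightarrow>
     (let \<alpha> = A + i * B; \<beta> = C + i * D; q = 2 ^ m in
        \<beta> * (1 + \<alpha> ^ (q + 1) + \<beta> ^ (q + 1)) + \<alpha> ^ (2 * q) = 0 \<and>
        \<beta> ^ (q + 1) \<noteq> 1 \<and>
        abs_trace m (\<beta> ^ (q + 1) / \<alpha> ^ (q + 1)) = 0 \<and>
        \<beta> \<in> subfield_q m)"
proof -
  define q where "q = (2::nat)^m"
  have cardq: "card (UNIV::'a set) = q*q" using card by (simp add: q_def power2_eq_square)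
  have "card {0::'a,1} \<le> card (UNIV::'a set)" by (rule card_mono) auto
  hence c2: "2 \<le> card (UNIV::'a set)" by simp
  have m1: "m \<ge> 1"
  proof (rule ccontr)
    assume "\<not> m \<ge> 1" hence "m = 0" by simp
    thus False using c2 card by simp
  qed
  have two: "(1::'a)+1=0"
  proof -
    have ev: "even (card (UNIV::'a set))" using card m1 by simp
    have "(-1::'a)^(card (UNIV::'a set) - 1) = 1" by (rule fermat) simp
    moreover have "odd (card (UNIV::'a set) - 1)" using ev c2 by (simp add: even_diff_nat)
    ultimately have "(-1::'a) = 1" by simp
    hence "1 = - (1::'a)" by simp
    thus ?thesis by (simp only: eq_neg_iff_add_eq_0)
  qed
  have mns: "- x = x" for x :: 'a by (rule char2_minus[OF two])
  have frobq: "(x+y)^q = x^q + y^q" for x y :: 'a unfolding q_def by (rule frob[OF two])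
  have xqq: "(x^q)^q = x" for x :: 'a
  proof (cases "x = 0")
    case True then show ?thesis by (simp add: q_def)
  next
    case False
    have "x^(q*q) = x * x^(q*q - 1)" using c2 cardq
      by (metis Suc_diff_1 not_gr_zero not_numeral_le_zero power_Suc)
    also have "\<dots> = x" using fermat[OF False] cardq by simp
    finally show ?thesis by (simp add: power_mult)
  qed
  have sub: "x \<in> subfield_q m \<longleftrightarrow> x^q = x" for x :: 'a by (simp add: subfield_q_def q_def)
  have iq: "i^q \<noteq> i" using i sub by simp
  have Aq: "A^q = A" and Bq: "B^q = B" and Cq: "C^q = C" and Dq: "D^q = D" using ABCD sub by auto
  have linq: "(X + i*Y)^q = X + i^q * Y" if "X^q = X" "Y^q = Y" for X Y
    using that frobq by (simp add: power_mult_distrib)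
  have canc: "Y = 0" if "X^q = X" "Y^q = Y" "(X + i*Y)^q = X + i*Y" for X Y
  proof -
    have "i^q * Y = i * Y" using linq[OF that(1,2)] that(3) by (metis add_left_cancel)
    hence "(i^q - i) * Y = 0" by (simp add: algebra_simps)
    thus ?thesis using iq by simp
  qed
  have pq1: "X^(q+1) = X^2" if "X^q = X" for X :: 'a
    using that by (simp add: power_add power2_eq_square)
  have p2q: "X^(2*q) = X^2" if "X^q = X" for X :: 'a
    using that by (metis power_mult mult.commute)
  have oneq: "(1::'a)^q = 1" by simp
  show ?thesis
    unfolding Let_def q_def[symmetric]
  proof
    assume "\<exists>\<xi>\<in>subfield_q m. \<xi> \<noteq> 0 \<and> \<xi> \<noteq> 1 \<and> abs_trace m (\<xi> / (\<xi> + 1)) = 0 \<and>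
            A = \<xi>^2 + \<xi> \<and> B = 0 \<and> D = 0 \<and> C = \<xi>^2"
    then obtain \<xi> where x: "\<xi>^q = \<xi>" "\<xi> \<noteq> 0" "\<xi> \<noteq> 1" "abs_trace m (\<xi> / (\<xi> + 1)) = 0"
      and AB: "A = \<xi>^2 + \<xi>" "B = 0" "D = 0" "C = \<xi>^2" using sub by blast
    have x1: "\<xi> + 1 \<noteq> 0"
    proof
      assume "\<xi> + 1 = 0" hence "\<xi> = - 1" by (simp add: eq_neg_iff_add_eq_0)
      thus False using x(3) mns[of 1] by simp
    qed
    have e1: "C*(1+A^2+C^2)+A^2 = (1+1)*(\<xi>^2+\<xi>^3+\<xi>^4+\<xi>^5+\<xi>^6)"
      unfolding AB by algebra
    have e2: "C^2 \<noteq> 1"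
    proof
      assume "C^2 = 1"
      hence "\<xi>^(2^2) = 1" using AB by (simp add: power_mult[symmetric])
      hence "(\<xi>+1)^(2^2) = 0" using frob[OF two, of \<xi> 1 2] two by simp
      hence "\<xi>+1 = 0" by (metis power_eq_0_iff)
      thus False using x1 by simp
    qed
    have Af: "A = \<xi>*(\<xi>+1)" "C = \<xi>*\<xi>" using AB by (simp_all add: algebra_simps power2_eq_square)
    have CA: "C/A = \<xi>/(\<xi>+1)" unfolding Af using x(2) x1 by simp
    have CAq: "(C/A)^q = C/A" using Aq Cq by (simp add: power_divide)
    have e3: "abs_trace m (C^2/A^2) = 0"
    proof -
      have t: "abs_trace m ((C/A)^2) = abs_trace m (C/A)"
        by (rule trace_sq) (use CAq in \<open>simp add: q_def\<close>)
      show ?thesis by (metis t CA x(4) power_divide)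
    qed
    show "(C + i * D) * (1 + (A + i * B) ^ (q + 1) + (C + i * D) ^ (q + 1)) + (A + i * B) ^ (2 * q) = 0 \<and>
    (C + i * D) ^ (q + 1) \<noteq> 1 \<and> abs_trace m ((C + i * D) ^ (q + 1) / (A + i * B) ^ (q + 1)) = 0 \<and> C + i * D \<in> subfield_q m"
      using e1 e2 e3 two AB(2,3) pq1[OF Aq] pq1[OF Cq] p2q[OF Aq] Cq sub by simp
  next
    assume H: "(C + i * D) * (1 + (A + i * B) ^ (q + 1) + (C + i * D) ^ (q + 1)) + (A + i * B) ^ (2 * q) = 0 \<and>
    (C + i * D) ^ (q + 1) \<noteq> 1 \<and> abs_trace m ((C + i * D) ^ (q + 1) / (A + i * B) ^ (q + 1)) = 0 \<and> C + i * D \<in> subfield_q m"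
    have D0: "D = 0" using canc[OF Cq Dq] H sub by blast
    define \<alpha> where "\<alpha> = A + i*B"
    define N where "N = \<alpha>^(q+1)"
    have Nq: "N^q = N" unfolding N_def
      by (simp add: power_add power_mult_distrib xqq mult.commute)
    have H1: "C*(1+N+C^2) + \<alpha>^(2*q) = 0" using H D0 pq1[OF Cq] unfolding N_def \<alpha>_def by simp
    have H2: "\<alpha>^(2*q) = C*(1+N+C^2)"
      using H1 mns by (metis add_eq_0_iff)
    have Eq: "(C*(1+N+C^2))^q = C*(1+N+C^2)"
    proof -
      have C2q: "(C^2)^q = C^2" by (simp only: pcomm[of C 2 q] Cq)
      show ?thesis using Cq Nq C2q frobq by (simp add: power_mult_distrib)
    qed
    have "\<alpha>^2 = (\<alpha>^q)^2"
    proof -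
      have a2q: "(\<alpha>^q)^2 = \<alpha>^(2*q)" by (simp only: power_mult pcomm[of \<alpha> q 2])
      have "((\<alpha>^q)^2)^q = ((\<alpha>^q)^q)^2" by (rule pcomm)
      hence "\<alpha>^2 = ((\<alpha>^q)^2)^q" by (simp only: xqq)
      also have "\<dots> = (\<alpha>^q)^2" unfolding a2q H2 Eq ..
      finally show ?thesis .
    qed
    hence aq: "\<alpha>^q = \<alpha>" using sq_inj[OF two] by metis
    have B0: "B = 0" using canc[OF Aq Bq] aq unfolding \<alpha>_def by blast
    have eq: "C*(1+A^2+C^2) + A^2 = 0" using H1 B0 pq1[OF Aq] p2q[OF Aq] unfolding N_def \<alpha>_def by simp
    have C0: "C \<noteq> 0" and A0: "A \<noteq> 0" using nz B0 D0 by auto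
    have C2: "C^2 \<noteq> 1" using H D0 pq1[OF Cq] by simp
    have C1: "C + 1 \<noteq> 0"
    proof
      assume "C + 1 = 0" hence "C = - 1" by (simp add: eq_neg_iff_add_eq_0)
      thus False using C2 mns[of 1] by simp
    qed
    have "(A^2 + C*(1+C))*(1+C) = C*(1+A^2+C^2) + A^2 + (1+1)*C^2" by algebra
    hence "(A^2 + C*(1+C))*(1+C) = 0" using eq two by simp
    hence "A^2 + C*(1+C) = 0" using C1 by (simp add: add.commute)
    hence A2: "A^2 = C*(1+C)" using mns by (metis add_eq_0_iff)
    define s where "s = C^(2^(m-1))"
    have e2m: "2^(m-1)*2 = (2::nat)^m" proof -
      have "m = Suc (m-1)" using m1 by simp
      hence "(2::nat)^m = 2^Suc (m-1)" by simp
      thus ?thesis by (simp only: power_Suc2)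
    qed
    have s2: "s^2 = C"
    proof -
      have "s^2 = C^(2^(m-1)*2)" unfolding s_def power_mult ..
      also have "\<dots> = C" using Cq unfolding e2m q_def .
      finally show ?thesis .
    qed
    have sq: "s^q = s" unfolding s_def by (simp only: pcomm[of C _ q] Cq)
    have "(s^2+s)^2 = (s^2)^2 + s^2" by (rule char2_sq[OF two])
    also have "\<dots> = C*(1+C)" unfolding s2 by (simp add: algebra_simps power2_eq_square)
    finally have "(s^2+s)^2 = A^2" using A2 by simp
    hence As: "A = s^2 + s" using sq_inj[OF two] by metis
    have s0: "s \<noteq> 0" using s2 C0 by auto
    have s1: "s \<noteq> 1" using s2 C2 by auto
    have s1': "s + 1 \<noteq> 0"
    proof
      assume "s + 1 = 0" hence "s = - 1" by (simp add: eq_neg_iff_add_eq_0)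
      thus False using s1 mns[of 1] by simp
    qed
    have Af: "A = s*(s+1)" "C = s*s" using As s2 by (simp_all add: algebra_simps power2_eq_square)
    have CA: "C/A = s/(s+1)" unfolding Af using s0 s1' by simp
    have CAq: "(C/A)^q = C/A" using Aq Cq by (simp add: power_divide)
    have "abs_trace m ((C/A)^2) = 0" using H D0 B0 pq1[OF Aq] pq1[OF Cq] by (simp add: power_divide)
    moreover have t: "abs_trace m ((C/A)^2) = abs_trace m (C/A)"
        by (rule trace_sq) (use CAq in \<open>simp add: q_def\<close>)
    ultimately have tr: "abs_trace m (s/(s+1)) = 0" using CA by simp
    show "\<exists>\<xi>\<in>subfield_q m. \<xi> \<noteq> 0 \<and> \<xi> \<noteq> 1 \<and> abs_trace m (\<xi> / (\<xi> + 1)) = 0 \<and>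
            A = \<xi>^2 + \<xi> \<and> B = 0 \<and> D = 0 \<and> C = \<xi>^2"
      using sq s0 s1 tr As B0 D0 s2 sub by auto
  qed
qed

end
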